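(* Let $(A,\mu,\alpha,\beta)$ be a BiHom-commutative algebra (with $\mu(a\otimes b)=a\cdot b$) and let $D:A\to A$ be a derivation in the usual sense, i.e. $D(x\cdot y)=x\cdot D(y)+D(x)\cdot y$ for all $x,y$, commuting with $\alpha$ and $\beta$. Define $a\ast b=a\cdot D(b)$. Then $(A,\ast,\alpha,\beta)$ is a BiHom-Novikov algebra.
   Context: Work over a field. A BiHom-associative algebra is a 4-tuple $(A,\mu,\alpha,\beta)$ with $\alpha,\beta$ commuting linear maps, multiplicative for $\mu$, and $\alpha(x)\cdot(y\cdot z)=(x\cdot y)\cdot\beta(z)$; it is BiHom-commutative if $\beta(a)\cdot\alpha(b)=\beta(b)\cdot\alpha(a)$ for all $a,b$. A BiHom-Novikov algebra is a 4-tuple $(A,\ast,\alpha,\beta)$ with commuting linear maps $\alpha,\beta$ multiplicative for $\ast$ such that for all $x,y,z$: $(\beta(x)\ast\alpha(y))\ast\beta(z)-\alpha\beta(x)\ast(\alpha(y)\ast z)=(\beta(y)\ast\alpha(x))\ast\beta(z)-\alpha\beta(y)\ast(\alpha(x)\ast z)$ and $(x\ast\beta(y))\ast\alpha\beta(z)=(x\ast\beta(z))\ast\alpha\beta(y)$. *)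

theory Defs
  imports Main "HOL.Vector_Spaces"
begin

definition bilinear_map :: "('k::field \<Rightarrow> 'v::ab_group_add \<Rightarrow> 'v) \<Rightarrow> ('v \<Rightarrow> 'v \<Rightarrow> 'v) \<Rightarrow> bool" where
  "bilinear_map scl m \<longleftrightarrow> (\<forall>y. Vector_Spaces.linear scl scl (\<lambda>x. m x y)) \<and> (\<forall>x. Vector_Spaces.linear scl scl (\<lambda>y. m x y))"

definition BiHom_assoc_alg ::
  "('k::field \<Rightarrow> 'v::ab_group_add \<Rightarrow> 'v) \<Rightarrow> ('v \<Rightarrow> 'v \<Rightarrow> 'v) \<Rightarrow> ('v \<Rightarrow> 'v) \<Rightarrow> ('v \<Rightarrow> 'v) \<Rightarrow> bool" where
  "BiHom_assoc_alg scl m \<alpha> \<beta> \<longleftrightarrow>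
     vector_space scl \<and> bilinear_map scl m \<and> Vector_Spaces.linear scl scl \<alpha> \<and> Vector_Spaces.linear scl scl \<beta> \<and>
     \<alpha> \<circ> \<beta> = \<beta> \<circ> \<alpha> \<and>
     (\<forall>x y. \<alpha> (m x y) = m (\<alpha> x) (\<alpha> y)) \<and> (\<forall>x y. \<beta> (m x y) = m (\<beta> x) (\<beta> y)) \<and>
     (\<forall>x y z. m (\<alpha> x) (m y z) = m (m x y) (\<beta> z))"

definition BiHom_comm_alg ::
  "('k::field \<Rightarrow> 'v::ab_group_add \<Rightarrow> 'v) \<Rightarrow> ('v \<Rightarrow> 'v \<Rightarrow> 'v) \<Rightarrow> ('v \<Rightarrow> 'v) \<Rightarrow> ('v \<Rightarrow> 'v) \<Rightarrow> bool" where
  "BiHom_comm_alg scl m \<alpha> \<beta> \<longleftrightarrow> BiHom_assoc_alg scl m \<alpha> \<beta> \<and>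
     (\<forall>a b. m (\<beta> a) (\<alpha> b) = m (\<beta> b) (\<alpha> a))"

definition BiHom_Novikov_alg ::
  "('k::field \<Rightarrow> 'v::ab_group_add \<Rightarrow> 'v) \<Rightarrow> ('v \<Rightarrow> 'v \<Rightarrow> 'v) \<Rightarrow> ('v \<Rightarrow> 'v) \<Rightarrow> ('v \<Rightarrow> 'v) \<Rightarrow> bool" where
  "BiHom_Novikov_alg scl s \<alpha> \<beta> \<longleftrightarrow>
     vector_space scl \<and> bilinear_map scl s \<and> Vector_Spaces.linear scl scl \<alpha> \<and> Vector_Spaces.linear scl scl \<beta> \<and>
     \<alpha> \<circ> \<beta> = \<beta> \<circ> \<alpha> \<and>
     (\<forall>x y. \<alpha> (s x y) = s (\<alpha> x) (\<alpha> y)) \<and> (\<forall>x y. \<beta> (s x y) = s (\<beta> x) (\<beta> y)) \<and>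
     (\<forall>x y z. s (s (\<beta> x) (\<alpha> y)) (\<beta> z) - s (\<alpha> (\<beta> x)) (s (\<alpha> y) z)
            = s (s (\<beta> y) (\<alpha> x)) (\<beta> z) - s (\<alpha> (\<beta> y)) (s (\<alpha> x) z)) \<and>
     (\<forall>x y z. s (s x (\<beta> y)) (\<alpha> (\<beta> z)) = s (s x (\<beta> z)) (\<alpha> (\<beta> y)))"

end

theory Submission
  imports Defs
begin

theorem corollary2p9:
  fixes scl :: "'k::field \<Rightarrow> 'v::ab_group_add \<Rightarrow> 'v"
    and m :: "'v \<Rightarrow> 'v \<Rightarrow> 'v" and \<alpha> \<beta> D :: "'v \<Rightarrow> 'v"
  assumes "BiHom_comm_alg scl m \<alpha> \<beta>"
    and "Vector_Spaces.linear scl scl D"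
    and "\<And>x y. D (m x y) = m x (D y) + m (D x) y"
    and "D \<circ> \<alpha> = \<alpha> \<circ> D" and "D \<circ> \<beta> = \<beta> \<circ> D"
  shows "BiHom_Novikov_alg scl (\<lambda>a b. m a (D b)) \<alpha> \<beta>"
proof -
  have vs: "vector_space scl" and bl: "bilinear_map scl m"
    and la: "Vector_Spaces.linear scl scl \<alpha>" and lb: "Vector_Spaces.linear scl scl \<beta>"
    and ab: "\<alpha> \<circ> \<beta> = \<beta> \<circ> \<alpha>"
    and ma: "\<And>x y. \<alpha> (m x y) = m (\<alpha> x) (\<alpha> y)" and mb: "\<And>x y. \<beta> (m x y) = m (\<beta> x) (\<beta> y)"
    and asc: "\<And>x y z. m (\<alpha> x) (m y z) = m (m x y) (\<beta> z)"
    and cm: "\<And>a b. m (\<beta> a) (\<alpha> b) = m (\<beta> b) (\<alpha> a)"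
    using assms(1) unfolding BiHom_comm_alg_def BiHom_assoc_alg_def by auto
  have Da: "\<And>x. D (\<alpha> x) = \<alpha> (D x)" using assms(4) by (metis comp_apply)
  have Db: "\<And>x. D (\<beta> x) = \<beta> (D x)" using assms(5) by (metis comp_apply)
  have abx: "\<And>x. \<alpha> (\<beta> x) = \<beta> (\<alpha> x)" using ab by (metis comp_apply)
  have lin2: "\<And>x. Vector_Spaces.linear scl scl (\<lambda>y. m x y)"
    and lin1: "\<And>y. Vector_Spaces.linear scl scl (\<lambda>x. m x y)"
    using bl unfolding bilinear_map_def by auto
  have madd: "\<And>x y z. m x (y + z) = m x y + m x z"
    using lin2 unfolding linear_iff by blast
  have bl2: "bilinear_map scl (\<lambda>a b. m a (D b))"
    unfolding bilinear_map_def
  proof (intro conjI allI)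
    fix y show "Vector_Spaces.linear scl scl (\<lambda>x. m x (D y))" using lin1 .
  next
    fix x show "Vector_Spaces.linear scl scl (\<lambda>y. m x (D y))"
      using Vector_Spaces.linear_compose[OF assms(2) lin2[of x]] by (simp add: comp_def)
  qed
  have sym: "\<And>x y w. m (\<alpha> (\<beta> x)) (m (\<alpha> y) w) = m (\<alpha> (\<beta> y)) (m (\<alpha> x) w)"
    by (metis asc cm)
  have N1: "m (m (\<beta> x) (D (\<alpha> y))) (D (\<beta> z)) - m (\<alpha> (\<beta> x)) (D (m (\<alpha> y) (D z)))
        = - m (\<alpha> (\<beta> x)) (m (\<alpha> y) (D (D z)))" for x y z
  proof -
    have "m (m (\<beta> x) (D (\<alpha> y))) (D (\<beta> z)) = m (\<alpha> (\<beta> x)) (m (\<alpha> (D y)) (D z))"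
      by (simp add: Da Db asc)
    moreover have "D (m (\<alpha> y) (D z)) = m (\<alpha> y) (D (D z)) + m (\<alpha> (D y)) (D z)"
      by (simp add: assms(3) Da)
    ultimately show ?thesis by (simp add: madd)
  qed
  have N2: "m (m x (D (\<beta> y))) (D (\<alpha> (\<beta> z))) = m (m x (D (\<beta> z))) (D (\<alpha> (\<beta> y)))" for x y z
  proof -
    have "m (m x (D (\<beta> y))) (D (\<alpha> (\<beta> z))) = m (\<alpha> x) (m (\<beta> (D y)) (\<alpha> (D z)))"
      by (simp add: Da Db abx asc)
    also have "\<dots> = m (\<alpha> x) (m (\<beta> (D z)) (\<alpha> (D y)))" by (simp add: cm)
    also have "\<dots> = m (m x (D (\<beta> z))) (D (\<alpha> (\<beta> y)))"
      by (simp add: Da Db abx asc)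
    finally show ?thesis .
  qed
  have N1': "m (m (\<beta> x) (D (\<alpha> y))) (D (\<beta> z)) - m (\<alpha> (\<beta> x)) (D (m (\<alpha> y) (D z)))
     = m (m (\<beta> y) (D (\<alpha> x))) (D (\<beta> z)) - m (\<alpha> (\<beta> y)) (D (m (\<alpha> x) (D z)))" for x y z
    unfolding N1 using sym by metis
  show ?thesis
    unfolding BiHom_Novikov_alg_def
    using vs bl2 la lb ab N2 N1' ma mb Da Db by auto
qed

end
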